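(* Let $M=V^TV$ be an $n\times n$ positive semidefinite matrix of rank $d$, where $V\in\mathbb{R}^{d\times n}$ has columns $v_1,\dots,v_n$, and let $1\le j\le d$. Let $\mu$ be the optimal value (infimum) of the program \[ \text{minimize } \Delta_j(W)\quad\text{s.t. } v_i^TWv_i\le 1\ \ \forall 1\le i\le n,\quad W\succ 0 \] over $d\times d$ symmetric matrices $W$. Then $\mathrm{msd}_j(M)\le e^{\mu}$.
   Context: For a $d\times d$ matrix $W\succ 0$, $\Delta_j(W)\coloneqq-\sum_{i=1}^j\ln\lambda_i$, where $\lambda_1\le\dots\le\lambda_d$ are the eigenvalues of $W$ (minus the sum of logarithms of the $j$ smallest eigenvalues). $\mathrm{msd}_j(M)\coloneqq\max\{\det(M_{S,S}): S\subseteq[n],\ |S|=j\}$. *)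

theory Defs
  imports "Jordan_Normal_Form.Char_Poly" "Jordan_Normal_Form.DL_Rank" "Jordan_Normal_Form.DL_Submatrix"
begin

definition eigvals_sorted :: "real mat \<Rightarrow> real list" where
  "eigvals_sorted W = sorted_list_of_multiset (proots (char_poly W))"

definition Delta :: "nat \<Rightarrow> real mat \<Rightarrow> real" where
  "Delta j W = - (\<Sum>i<j. ln (eigvals_sorted W ! i))"

definition pos_def :: "nat \<Rightarrow> real mat \<Rightarrow> bool" where
  "pos_def d W \<longleftrightarrow> W \<in> carrier_mat d d \<and> transpose_mat W = W \<and>
     (\<forall>x \<in> carrier_vec d. x \<noteq> 0\<^sub>v d \<longrightarrow> x \<bullet> (W *\<^sub>v x) > 0)"

definition msd :: "nat \<Rightarrow> real mat \<Rightarrow> real" where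
  "msd j M = Max {det (submatrix M S S) | S. S \<subseteq> {..<dim_row M} \<and> card S = j}"

end

theory Submission
  imports Defs
begin

lemma sprod_self_pos:
  fixes w :: "real vec"
  assumes "w \<in> carrier_vec n" "w \<noteq> 0\<^sub>v n"
  shows "w \<bullet> w > 0"
proof -
  from assms obtain i where i: "i < n" "w $ i \<noteq> 0" by (metis eq_vecI carrier_vecD index_zero_vec(1,2))
  have "w \<bullet> w = (\<Sum>k\<in>{0..<n}. w $ k * w $ k)" using assms by (simp add: scalar_prod_def)
  also have "\<dots> > 0"
  proof (rule sum_pos2[of _ i])
    show "w $ i * w $ i > 0" using i(2) by (metis not_real_square_gt_zero)
  qed (use i in auto)
  finally show ?thesis .
qed

lemma real_eigvec:
  fixes A :: "real mat"
  assumes A: "A \<in> carrier_mat n n" and sym: "transpose_mat A = A" and n: "n > 0"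
  shows "\<exists> l v. v \<in> carrier_vec n \<and> v \<bullet> v = 1 \<and> A *\<^sub>v v = l \<cdot>\<^sub>v v"
proof -
  let ?Ac = "map_mat complex_of_real A"
  have Ac: "?Ac \<in> carrier_mat n n" using A by simp
  from char_poly_factorized[OF Ac] obtain as where
    cp: "char_poly ?Ac = (\<Prod>a\<leftarrow>as. [:- a, 1:])" and len: "length as = n" by blast
  from len n obtain a as' where as: "as = a # as'" by (cases as) auto
  have "poly (char_poly ?Ac) a = 0" unfolding cp as by simp
  hence "eigenvalue ?Ac a" using eigenvalue_root_char_poly[OF Ac] by simp
  then obtain z where ev: "eigenvector ?Ac z a" unfolding eigenvalue_def by blast
  hence z: "z \<in> carrier_vec n" and z0: "z \<noteq> 0\<^sub>v n" and eq: "?Ac *\<^sub>v z = a \<cdot>\<^sub>v z"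
    unfolding eigenvector_def using A by auto
  have symA: "\<And>i k. i < n \<Longrightarrow> k < n \<Longrightarrow> A $$ (i,k) = A $$ (k,i)"
    by (metis A carrier_matD(1,2) index_transpose_mat(1) sym)
  have comp: "(\<Sum>k<n. complex_of_real (A $$ (i,k)) * z $ k) = a * z $ i" if i: "i < n" for i
  proof -
    have "(?Ac *\<^sub>v z) $ i = (a \<cdot>\<^sub>v z) $ i" using eq by simp
    thus ?thesis using i A z by (simp add: scalar_prod_def atLeast0LessThan)
  qed
  define S where "S = (\<Sum>i<n. cnj (z $ i) * (\<Sum>k<n. complex_of_real (A $$ (i,k)) * z $ k))"
  have "S = (\<Sum>i<n. cnj (z $ i) * (a * z $ i))" unfolding S_def by (rule sum.cong, auto simp: comp)
  hence S1: "S = a * (\<Sum>i<n. cnj (z $ i) * z $ i)"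
    by (simp add: sum_distrib_left mult_ac)
  have "cnj S = (\<Sum>i<n. \<Sum>k<n. complex_of_real (A $$ (i,k)) * z $ i * cnj (z $ k))"
    unfolding S_def by (simp add: sum_distrib_left mult_ac)
  also have "\<dots> = (\<Sum>k<n. \<Sum>i<n. complex_of_real (A $$ (i,k)) * z $ i * cnj (z $ k))"
    by (rule sum.swap)
  also have "\<dots> = S"
    unfolding S_def sum_distrib_left
    by (intro sum.cong refl, auto simp: symA mult_ac)
  finally have "cnj S = S" .
  hence "Im (cnj S) = Im S" by simp
  hence ImS: "Im S = 0" by simp
  define N where "N = (\<Sum>i<n. (cmod (z $ i))^2)"
  have N: "(\<Sum>i<n. cnj (z $ i) * z $ i) = complex_of_real N"
    unfolding N_def of_real_sum by (rule sum.cong, simp, metis complex_norm_square mult.commute)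
  from z z0 obtain i0 where i0: "i0 < n" "z $ i0 \<noteq> 0" by (metis eq_vecI carrier_vecD index_zero_vec(1,2))
  have Npos: "N > 0" unfolding N_def
    by (rule sum_pos2[of _ i0], use i0 in auto)
  have "Im a * N = 0" using ImS unfolding S1 N by simp
  hence Ima: "Im a = 0" using Npos by simp
  define r where "r = Re a"
  have a: "a = complex_of_real r" using Ima unfolding r_def by (simp add: complex_eq_iff)
  let ?x = "vec n (\<lambda>k. Re (z $ k))"
  let ?y = "vec n (\<lambda>k. Im (z $ k))"
  have compR: "(\<Sum>k<n. A $$ (i,k) * Re (z $ k)) = r * Re (z $ i)"
   and compI: "(\<Sum>k<n. A $$ (i,k) * Im (z $ k)) = r * Im (z $ i)" if i: "i < n" for i
  proof -
    have "Re (\<Sum>k<n. complex_of_real (A $$ (i,k)) * z $ k) = Re (a * z $ i)" using comp[OF i] by simp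
    thus "(\<Sum>k<n. A $$ (i,k) * Re (z $ k)) = r * Re (z $ i)" unfolding a by (simp add: Re_sum)
    have "Im (\<Sum>k<n. complex_of_real (A $$ (i,k)) * z $ k) = Im (a * z $ i)" using comp[OF i] by simp
    thus "(\<Sum>k<n. A $$ (i,k) * Im (z $ k)) = r * Im (z $ i)" unfolding a by (simp add: Im_sum)
  qed
  have ex: "\<exists>w. w \<in> carrier_vec n \<and> w \<noteq> 0\<^sub>v n \<and> A *\<^sub>v w = r \<cdot>\<^sub>v w"
  proof (cases "Re (z $ i0) = 0")
    case False
    show ?thesis
    proof (intro exI[of _ ?x] conjI)
      show "?x \<noteq> 0\<^sub>v n" using False i0 by (metis index_vec index_zero_vec(1))
      show "A *\<^sub>v ?x = r \<cdot>\<^sub>v ?x"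
        by (rule eq_vecI, use A compR in \<open>auto simp: scalar_prod_def atLeast0LessThan\<close>)
    qed auto
  next
    case True
    hence "Im (z $ i0) \<noteq> 0" using i0 by (simp add: complex_eq_iff)
    show ?thesis
    proof (intro exI[of _ ?y] conjI)
      show "?y \<noteq> 0\<^sub>v n" using \<open>Im (z $ i0) \<noteq> 0\<close> i0 by (metis index_vec index_zero_vec(1))
      show "A *\<^sub>v ?y = r \<cdot>\<^sub>v ?y"
        by (rule eq_vecI, use A compI in \<open>auto simp: scalar_prod_def atLeast0LessThan\<close>)
    qed auto
  qed
  then obtain w where w: "w \<in> carrier_vec n" "w \<noteq> 0\<^sub>v n" "A *\<^sub>v w = r \<cdot>\<^sub>v w" by blast
  have wpos: "w \<bullet> w > 0" using sprod_self_pos[OF w(1,2)] .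
  define v where "v = (1 / sqrt (w \<bullet> w)) \<cdot>\<^sub>v w"
  show ?thesis
  proof (intro exI[of _ r] exI[of _ v] conjI)
    show "v \<in> carrier_vec n" unfolding v_def using w by simp
    show "v \<bullet> v = 1" unfolding v_def using w wpos
      by (simp add: smult_scalar_prod_distrib scalar_prod_smult_distrib)
    show "A *\<^sub>v v = r \<cdot>\<^sub>v v" unfolding v_def using w A
      by (simp add: mult_mat_vec smult_smult_assoc mult.commute)
  qed
qed


lemma householder:
  fixes v :: "real vec"
  assumes v: "v \<in> carrier_vec n" "v \<bullet> v = 1" and n: "n > 0"
  shows "\<exists>H. H \<in> carrier_mat n n \<and> transpose_mat H = H \<and> H * H = 1\<^sub>m n \<and> col H 0 = v"
proof (cases "v = unit_vec n 0")
  case True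
  show ?thesis by (intro exI[of _ "1\<^sub>m n"], use True n in auto)
next
  case False
  define w where "w = v - unit_vec n 0"
  have w: "w \<in> carrier_vec n" unfolding w_def using v by simp
  have wi: "\<And>i. i < n \<Longrightarrow> w $ i = v $ i - (if i = 0 then 1 else 0)"
    unfolding w_def using v by auto
  have w0: "w \<noteq> 0\<^sub>v n"
  proof
    assume "w = 0\<^sub>v n"
    hence "\<And>i. i < n \<Longrightarrow> w $ i = 0" by simp
    hence "v = unit_vec n 0" using v wi by (intro eq_vecI) (auto simp: unit_vec_def)
    thus False using False by simp
  qed
  define W2 where "W2 = (\<Sum>k<n. w $ k * w $ k)"
  have W2pos: "W2 > 0" using sprod_self_pos[OF w w0] w unfolding W2_def by (simp add: scalar_prod_def atLeast0LessThan)
  have vv: "(\<Sum>k<n. v $ k * v $ k) = 1" using v by (simp add: scalar_prod_def atLeast0LessThan)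
  have "W2 = (\<Sum>k<n. v $ k * v $ k - (if k = 0 then 2 * v $ 0 - 1 else 0))"
    unfolding W2_def by (rule sum.cong, auto simp: wi algebra_simps)
  also have "\<dots> = 1 - 2 * v $ 0 + 1"
    using n by (simp add: sum_subtractf vv)
  finally have W2v: "W2 = - 2 * w $ 0" using wi[OF n] by simp
  define c where "c = 2 / W2"
  have cW2: "c * W2 = 2" unfolding c_def using W2pos by simp
  have cw0: "c * w $ 0 = -1" unfolding c_def W2v using W2pos W2v by (auto simp: field_simps)
  define H where "H = mat n n (\<lambda>(i,j). (if i = j then 1 else 0) - c * w $ i * w $ j)"
  have H: "H \<in> carrier_mat n n" unfolding H_def by simp
  show ?thesis
  proof (intro exI[of _ H] conjI H)
    show "transpose_mat H = H" unfolding H_def by (rule eq_matI, auto)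
    show "col H 0 = v"
    proof (rule eq_vecI)
      fix i assume "i < dim_vec v"
      hence i: "i < n" using v by simp
      have "col H 0 $ i = (if i = 0 then 1 else 0) - (c * w $ 0) * w $ i" unfolding H_def using i n by simp
      also have "\<dots> = v $ i" unfolding cw0 using wi[OF i] by simp
      finally show "col H 0 $ i = v $ i" .
    qed (use v H in auto)
    show "H * H = 1\<^sub>m n"
    proof (rule eq_matI)
      fix i j assume "i < dim_row (1\<^sub>m n)" "j < dim_col (1\<^sub>m n)"
      hence i: "i < n" and j: "j < n" by auto
      have "(H * H) $$ (i,j) = (\<Sum>k<n. ((if i = k then 1 else 0) - c * w $ i * w $ k) * ((if k = j then 1 else 0) - c * w $ k * w $ j))"
        using i j unfolding H_def by (simp add: scalar_prod_def atLeast0LessThan)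
      also have "\<dots> = (\<Sum>k<n. (if k = i then (if i = j then 1 else 0) else 0) - (if k = j then c * w $ i * w $ k else 0)
             - (if k = i then c * w $ k * w $ j else 0) + (c * c * w $ i * w $ j) * (w $ k * w $ k))"
        by (rule sum.cong, auto simp: algebra_simps)
      also have "\<dots> = (if i = j then 1 else 0) - c * w $ i * w $ j - c * w $ i * w $ j + (c * c * w $ i * w $ j) * W2"
        using i j unfolding W2_def by (simp add: sum.distrib sum_subtractf sum_distrib_left[symmetric])
      also have "\<dots> = (if i = j then 1 else 0)"
        using cW2 by (simp add: algebra_simps)
      finally show "(H * H) $$ (i,j) = 1\<^sub>m n $$ (i,j)" using i j by simp
    qed (use H in auto)
  qed
qed


lemma mult_unit_vec_col:
  assumes A: "(A :: real mat) \<in> carrier_mat nr n" and i: "i < n"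
  shows "A *\<^sub>v unit_vec n i = col A i"
proof (rule eq_vecI)
  fix k assume "k < dim_vec (col A i)"
  hence k: "k < nr" using A by simp
  have "(A *\<^sub>v unit_vec n i) $ k = (\<Sum>j\<in>{0..<n}. A $$ (k,j) * (if j = i then 1 else 0))"
    using A k i by (simp add: scalar_prod_def)
  also have "\<dots> = A $$ (k,i)" using i by (simp add: if_distrib cong: if_cong)
  finally show "(A *\<^sub>v unit_vec n i) $ k = col A i $ k" using A k i by simp
qed (use A in auto)

lemma assoc_dim:
  fixes A :: "'a :: semiring_0 mat"
  shows "dim_col A = dim_row B \<Longrightarrow> dim_col B = dim_row C \<Longrightarrow> A * B * C = A * (B * C)"
  by (rule assoc_mult_mat[of A "dim_row A" "dim_col A" B "dim_col B" C "dim_col C"], auto)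

definition diagm :: "nat \<Rightarrow> (nat \<Rightarrow> real) \<Rightarrow> real mat" where
  "diagm n \<mu> = mat n n (\<lambda>(i,j). if i = j then \<mu> i else 0)"

lemma diagm_carrier[simp]: "diagm n \<mu> \<in> carrier_mat n n"
  unfolding diagm_def by simp

lemma diagm_dim[simp]: "dim_row (diagm n \<mu>) = n" "dim_col (diagm n \<mu>) = n"
  unfolding diagm_def by simp_all

lemma diagm_index[simp]: "i < n \<Longrightarrow> j < n \<Longrightarrow> diagm n \<mu> $$ (i,j) = (if i = j then \<mu> i else 0)"
  unfolding diagm_def by simp

lemma spectral:
  fixes A :: "real mat"
  assumes "A \<in> carrier_mat n n" and "transpose_mat A = A"
  shows "\<exists>Q \<mu>. Q \<in> carrier_mat n n \<and> transpose_mat Q * Q = 1\<^sub>m n \<and> Q * transpose_mat Q = 1\<^sub>m n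
     \<and> A = Q * diagm n \<mu> * transpose_mat Q"
  using assms
proof (induction n arbitrary: A)
  case 0
  show ?case by (intro exI[of _ "1\<^sub>m 0"] exI[of _ "\<lambda>_. 0"], use 0 in \<open>auto intro!: eq_matI\<close>)
next
  case (Suc m A)
  let ?n = "Suc m"
  have A: "A \<in> carrier_mat ?n ?n" and symA: "transpose_mat A = A" using Suc by auto
  obtain l v where v: "v \<in> carrier_vec ?n" "v \<bullet> v = 1" and Av: "A *\<^sub>v v = l \<cdot>\<^sub>v v"
    using real_eigvec[OF A symA] by auto
  obtain H where H: "H \<in> carrier_mat ?n ?n" and symH: "transpose_mat H = H"
    and HH: "H * H = 1\<^sub>m ?n" and Hc: "col H 0 = v"
    using householder[OF v] by auto
  let ?e = "unit_vec ?n 0 :: real vec"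
  have He: "H *\<^sub>v ?e = v" using mult_unit_vec_col[OF H] Hc by simp
  have Hv: "H *\<^sub>v v = ?e" unfolding He[symmetric] using H HH
    by (simp add: assoc_mult_mat_vec[symmetric, of _ ?n ?n _ ?n])
  define B where "B = H * A * H"
  have B: "B \<in> carrier_mat ?n ?n" unfolding B_def using H A by simp
  have symB: "transpose_mat B = B"
  proof -
    have "transpose_mat B = transpose_mat H * (transpose_mat A * transpose_mat H)" unfolding B_def
      using H A by (simp add: transpose_mult[of _ ?n ?n _ ?n])
    also have "\<dots> = B" unfolding B_def symA symH using H A by simp
    finally show ?thesis .
  qed
  have Be: "B *\<^sub>v ?e = l \<cdot>\<^sub>v ?e"
  proof -
    have "B *\<^sub>v ?e = H *\<^sub>v (A *\<^sub>v (H *\<^sub>v ?e))" unfolding B_def using H A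
      by (simp add: assoc_mult_mat_vec[of _ ?n ?n _ ?n])
    also have "\<dots> = l \<cdot>\<^sub>v ?e" unfolding He Av using H v Hv by (simp add: mult_mat_vec)
    finally show ?thesis .
  qed
  have Bcol: "B $$ (i,0) = (if i = 0 then l else 0)" if i: "i < ?n" for i
  proof -
    have "(B *\<^sub>v ?e) $ i = B $$ (i,0)" using mult_unit_vec_col[OF B, of 0] B i by simp
    thus ?thesis using Be i by (cases "i = 0") auto
  qed
  have Bsym: "B $$ (i,k) = B $$ (k,i)" if "i < ?n" "k < ?n" for i k
    using symB B that by (metis carrier_matD(1,2) index_transpose_mat(1))
  define A' where "A' = mat m m (\<lambda>(i,j). B $$ (Suc i, Suc j))"
  have A': "A' \<in> carrier_mat m m" unfolding A'_def by simp
  have symA': "transpose_mat A' = A'" unfolding A'_def by (rule eq_matI, auto intro: Bsym)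
  from Suc.IH[OF A' symA'] obtain Q' \<mu>' where Q': "Q' \<in> carrier_mat m m"
    and Q'Q: "transpose_mat Q' * Q' = 1\<^sub>m m" and A'eq: "A' = Q' * diagm m \<mu>' * transpose_mat Q'"
    by auto
  define Q2 where "Q2 = four_block_mat (1\<^sub>m 1) (0\<^sub>m 1 m) (0\<^sub>m m 1) Q'"
  define \<mu> where "\<mu> = (\<lambda>i. if i = 0 then l else \<mu>' (i - 1))"
  let ?L = "mat 1 1 (\<lambda>_. l) :: real mat"
  have Q2: "Q2 \<in> carrier_mat ?n ?n" unfolding Q2_def using Q' by auto
  have Dblock: "diagm ?n \<mu> = four_block_mat ?L (0\<^sub>m 1 m) (0\<^sub>m m 1) (diagm m \<mu>')"
    unfolding diagm_def \<mu>_def by (rule eq_matI, auto)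
  have Bblock: "B = four_block_mat ?L (0\<^sub>m 1 m) (0\<^sub>m m 1) A'"
  proof (rule eq_matI)
    fix i j assume ij: "i < dim_row (four_block_mat ?L (0\<^sub>m 1 m) (0\<^sub>m m 1) A')"
      "j < dim_col (four_block_mat ?L (0\<^sub>m 1 m) (0\<^sub>m m 1) A')"
    hence i: "i < ?n" and j: "j < ?n" using A' by auto
    show "B $$ (i,j) = four_block_mat ?L (0\<^sub>m 1 m) (0\<^sub>m m 1) A' $$ (i,j)"
    proof (cases "j = 0")
      case True thus ?thesis using i Bcol A' by auto
    next
      case False
      show ?thesis
      proof (cases "i = 0")
        case True thus ?thesis using j Bcol Bsym[OF i j] A' False by auto
      next
        case False
        thus ?thesis using i j \<open>j \<noteq> 0\<close> A' unfolding A'_def by (cases i; cases j; auto)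
      qed
    qed
  qed (use B A' in auto)
  have BQ: "B = Q2 * diagm ?n \<mu> * transpose_mat Q2"
  proof -
    have tQ2: "transpose_mat Q2 = four_block_mat (1\<^sub>m 1) (0\<^sub>m 1 m) (0\<^sub>m m 1) (transpose_mat Q')"
      unfolding Q2_def using Q' by (subst transpose_four_block_mat[of _ 1 1 _ m _ m], auto)
    have L: "?L \<in> carrier_mat 1 1" by simp
    have "Q2 * diagm ?n \<mu> = four_block_mat ?L (0\<^sub>m 1 m) (0\<^sub>m m 1) (Q' * diagm m \<mu>')"
      unfolding Q2_def Dblock
      by (subst mult_four_block_mat[OF one_carrier_mat zero_carrier_mat zero_carrier_mat Q' L zero_carrier_mat zero_carrier_mat diagm_carrier],
          use Q' in \<open>auto simp: left_mult_zero_mat[OF diagm_carrier]\<close>)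
    also have "\<dots> * transpose_mat Q2 = four_block_mat ?L (0\<^sub>m 1 m) (0\<^sub>m m 1) (Q' * diagm m \<mu>' * transpose_mat Q')"
      unfolding tQ2
      by (subst mult_four_block_mat[OF L zero_carrier_mat zero_carrier_mat _ one_carrier_mat zero_carrier_mat zero_carrier_mat],
          use Q' in \<open>auto simp: right_mult_zero_mat[of "Q' * diagm m \<mu>'" m m] left_add_zero_mat[of "Q' * diagm m \<mu>' * transpose_mat Q'" m m]\<close>)
    finally show ?thesis unfolding Bblock A'eq by simp
  qed
  have tQ2: "transpose_mat Q2 = four_block_mat (1\<^sub>m 1) (0\<^sub>m 1 m) (0\<^sub>m m 1) (transpose_mat Q')"
    unfolding Q2_def using Q' by (subst transpose_four_block_mat[of _ 1 1 _ m _ m], auto)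
  have Q2Q2: "transpose_mat Q2 * Q2 = 1\<^sub>m ?n"
  proof -
    have "transpose_mat Q2 * Q2 = four_block_mat (1\<^sub>m 1) (0\<^sub>m 1 m) (0\<^sub>m m 1) (transpose_mat Q' * Q')"
      unfolding tQ2 unfolding Q2_def
      by (subst mult_four_block_mat[OF one_carrier_mat zero_carrier_mat zero_carrier_mat _ one_carrier_mat zero_carrier_mat zero_carrier_mat Q'],
          use Q' in auto)
    also have "\<dots> = 1\<^sub>m (1 + m)" unfolding Q'Q by (rule four_block_one_mat)
    finally show ?thesis by simp
  qed
  have tQ2c: "transpose_mat Q2 \<in> carrier_mat ?n ?n" using Q2 by simp
  define Q where "Q = H * Q2"
  have Q: "Q \<in> carrier_mat ?n ?n" unfolding Q_def using H Q2 by simp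
  have tQ: "transpose_mat Q = transpose_mat Q2 * H" unfolding Q_def
    using transpose_mult[OF H Q2] symH by simp
  have QQ: "transpose_mat Q * Q = 1\<^sub>m ?n"
  proof -
    have "transpose_mat Q * Q = transpose_mat Q2 * H * (H * Q2)" unfolding tQ unfolding Q_def ..
    also have "\<dots> = transpose_mat Q2 * ((H * H) * Q2)"
      using assoc_mult_mat[OF tQ2c H, of "H * Q2" ?n] H Q2 by simp
    also have "\<dots> = 1\<^sub>m ?n" unfolding HH using Q2 Q2Q2 by simp
    finally show ?thesis .
  qed
  have QQ': "Q * transpose_mat Q = 1\<^sub>m ?n"
    by (rule mat_mult_left_right_inverse[OF _ Q QQ], use Q in simp)
  have "A = (H * H) * A * (H * H)" unfolding HH using A by simp
  also have "\<dots> = H * B * H" unfolding B_def using A H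
    by (simp add: assoc_dim)
  also have "\<dots> = Q * diagm ?n \<mu> * transpose_mat Q" unfolding BQ tQ unfolding Q_def using H Q2 tQ2c
    by (simp add: assoc_dim)
  finally show ?case using Q QQ QQ' by blast
qed



lemma diagm_ut: "upper_triangular (diagm n \<mu>)"
  unfolding upper_triangular_def by auto

lemma diag_mat_diagm: "diag_mat (diagm n \<mu>) = map \<mu> [0..<n]"
  unfolding diag_mat_def by auto

lemma det_diagm: "det (diagm n \<mu>) = (\<Prod>i<n. \<mu> i)"
  using det_upper_triangular[OF diagm_ut diagm_carrier, of n \<mu>]
  by (simp add: diag_mat_diagm prod.list_conv_set_nth atLeast0LessThan prod_list_diag_prod)

lemma proots_linear_list: "proots (\<Prod>a\<leftarrow>xs. [:- a, 1:]) = mset (xs :: real list)"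
proof (induction xs)
  case (Cons x xs)
  have e: "(\<Prod>a\<leftarrow>x # xs. [:- a, 1:]) = [:- x, 1:] * (\<Prod>a\<leftarrow>xs. [:- a, 1:])" by simp
  have P0: "(\<Prod>a\<leftarrow>xs. [:- a, 1:]) \<noteq> 0" by (auto simp: prod_list_zero_iff)
  have "proots ([:- x, 1:] * (\<Prod>a\<leftarrow>xs. [:- a, 1:])) = proots [:- x, 1:] + proots (\<Prod>a\<leftarrow>xs. [:- a, 1:])"
    using P0 by (intro proots_mult) auto
  moreover have "proots [:- x, 1:] = {#x#}" using proots_linear_factor[of "-x"] by simp
  ultimately show ?case unfolding e using Cons by simp
qed simp

context
  fixes A Q :: "real mat" and n :: nat and \<mu> :: "nat \<Rightarrow> real"
  assumes A: "A \<in> carrier_mat n n" and Q: "Q \<in> carrier_mat n n"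
    and QQ: "transpose_mat Q * Q = 1\<^sub>m n" and QQ': "Q * transpose_mat Q = 1\<^sub>m n"
    and AQ: "A = Q * diagm n \<mu> * transpose_mat Q"
begin

lemma spec_conj: "transpose_mat Q * A * Q = diagm n \<mu>"
proof -
  have tQ: "transpose_mat Q \<in> carrier_mat n n" using Q by simp
  have "transpose_mat Q * A * Q = (transpose_mat Q * Q) * diagm n \<mu> * (transpose_mat Q * Q)"
    unfolding AQ using Q tQ by (simp add: assoc_dim)
  thus ?thesis unfolding QQ by simp
qed

lemma spec_mu: assumes i: "i < n" shows "\<mu> i = col Q i \<bullet> (A *\<^sub>v col Q i)"
proof -
  have "\<mu> i = (transpose_mat Q * A * Q) $$ (i,i)" unfolding spec_conj using i by simp
  also have "\<dots> = col Q i \<bullet> (A *\<^sub>v col Q i)" using A Q i by (simp add: assoc_dim mult_mat_vec_def)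
  finally show ?thesis .
qed

lemma spec_col_norm: assumes i: "i < n" shows "col Q i \<bullet> col Q i = 1"
proof -
  have "(transpose_mat Q * Q) $$ (i,i) = 1" unfolding QQ using i by simp
  thus ?thesis using Q i by simp
qed

lemma spec_char_poly: "char_poly A = (\<Prod>a\<leftarrow>map \<mu> [0..<n]. [:- a, 1:])"
proof -
  have "similar_mat_wit A (diagm n \<mu>) Q (transpose_mat Q)"
    unfolding similar_mat_wit_def Let_def using A Q QQ QQ' AQ by auto
  hence "char_poly A = char_poly (diagm n \<mu>)" using char_poly_similar unfolding similar_mat_def by blast
  also have "\<dots> = (\<Prod>a\<leftarrow>map \<mu> [0..<n]. [:- a, 1:])"
    using char_poly_upper_triangular[OF diagm_carrier diagm_ut] diag_mat_diagm by metis
  finally show ?thesis .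
qed

lemma spec_eigvals: "eigvals_sorted A = sort (map \<mu> [0..<n])"
  unfolding eigvals_sorted_def spec_char_poly proots_linear_list by (rule sorted_list_of_multiset_mset)

lemma spec_det: "det A = (\<Prod>i<n. \<mu> i)"
proof -
  have tQ: "transpose_mat Q \<in> carrier_mat n n" using Q by simp
  have "det A = det Q * det (diagm n \<mu>) * det (transpose_mat Q)"
    unfolding AQ using Q tQ by (simp add: det_mult[of _ n])
  also have "\<dots> = det (diagm n \<mu>) * det (Q * transpose_mat Q)" using Q tQ by (simp add: det_mult[of _ n])
  finally show ?thesis unfolding QQ' det_diagm by simp
qed

end


lemma prod_take_sorted_le:
  fixes ys :: "real list"
  assumes "sorted ys" "\<forall>y\<in>set ys. y > 0" "M \<subseteq># mset ys" "size M = j"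
  shows "prod_list (take j ys) \<le> prod_mset M"
  using assms
proof (induction ys arbitrary: M j)
  case Nil
  thus ?case by simp
next
  case (Cons y ys M j)
  have sys: "sorted ys" and yle: "\<forall>z\<in>set ys. y \<le> z" using Cons.prems(1) by auto
  have pos: "\<forall>z\<in>set ys. z > 0" and ypos: "y > 0" using Cons.prems(2) by auto
  show ?case
  proof (cases j)
    case 0
    thus ?thesis using Cons.prems(4) by simp
  next
    case (Suc j')
    show ?thesis
    proof (cases "y \<in># M")
      case True
      define M' where "M' = M - {#y#}"
      have M: "M = add_mset y M'" unfolding M'_def using True by simp
      have M'sub: "M' \<subseteq># mset ys" using Cons.prems(3) unfolding M by simp
      have "size M' = j'" using Cons.prems(4) unfolding M Suc by simp
      from Cons.IH[OF sys pos M'sub this]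
      have "prod_list (take j' ys) \<le> prod_mset M'" .
      hence "y * prod_list (take j' ys) \<le> y * prod_mset M'" using ypos by simp
      thus ?thesis unfolding M Suc by simp
    next
      case False
      have Msub: "M \<subseteq># mset ys"
      proof (rule mset_subset_eqI)
        fix x
        have "count M x \<le> count (mset (y # ys)) x" using Cons.prems(3) by (rule mset_subset_eq_count)
        thus "count M x \<le> count (mset ys) x" using False by (cases "x = y") (auto simp: not_in_iff)
      qed
      have jlen: "j \<le> length ys" using size_mset_mono[OF Msub] Cons.prems(4) by simp
      from Cons.IH[OF sys pos Msub Cons.prems(4)]
      have IH: "prod_list (take j ys) \<le> prod_mset M" .
      have j'lt: "j' < length ys" using jlen Suc by simp
      have "prod_list (take j (y # ys)) = y * prod_list (take j' ys)" unfolding Suc by simp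
      also have "\<dots> \<le> ys ! j' * prod_list (take j' ys)"
      proof (rule mult_right_mono)
        show "y \<le> ys ! j'" using yle j'lt by simp
        show "0 \<le> prod_list (take j' ys)" using pos by (intro prod_list_nonneg) (meson in_set_takeD less_imp_le)
      qed
      also have "\<dots> = prod_list (take j ys)" unfolding Suc using j'lt by (simp add: take_Suc_conv_app_nth)
      also have "\<dots> \<le> prod_mset M" by (rule IH)
      finally show ?thesis .
    qed
  qed
qed

lemma prod_subset_ge_sorted:
  fixes \<mu> :: "nat \<Rightarrow> real"
  assumes pos: "\<And>i. i < d \<Longrightarrow> \<mu> i > 0" and T: "T \<subseteq> {0..<d}" "card T = j"
  shows "(\<Prod>k<j. sort (map \<mu> [0..<d]) ! k) \<le> (\<Prod>t\<in>T. \<mu> t)"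
proof -
  let ?ys = "sort (map \<mu> [0..<d])"
  have fT: "finite T" using T finite_subset by blast
  have jd: "j \<le> d" using T card_mono[OF _ T(1)] by fastforce
  have "(\<Prod>k<j. ?ys ! k) = prod_list (take j ?ys)"
    using jd by (simp add: prod.list_conv_set_nth atLeast0LessThan min_def)
  also have "\<dots> \<le> prod_mset (image_mset \<mu> (mset_set T))"
  proof (rule prod_take_sorted_le)
    show "\<forall>y\<in>set ?ys. y > 0" using pos by auto
    have "mset_set T \<subseteq># mset_set {0..<d}" using T by (intro subset_imp_msubset_mset_set) auto
    hence "image_mset \<mu> (mset_set T) \<subseteq># image_mset \<mu> (mset_set {0..<d})" by (rule image_mset_subseteq_mono)
    thus "image_mset \<mu> (mset_set T) \<subseteq># mset ?ys" by simp
    show "size (image_mset \<mu> (mset_set T)) = j" using T by simp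
  qed simp
  also have "\<dots> = (\<Prod>t\<in>T. \<mu> t)" by (simp add: prod_unfold_prod_mset)
  finally show ?thesis .
qed


definition Fs :: "nat \<Rightarrow> nat \<Rightarrow> (nat \<Rightarrow> nat) set" where
  "Fs d j = {f. (\<forall>i\<in>{0..<j}. f i \<in> {0..<d}) \<and> (\<forall>i. i \<notin> {0..<j} \<longrightarrow> f i = i)}"

lemma finite_Fs: "finite (Fs d j)"
  unfolding Fs_def by (rule finite_bounded_functions) auto

lemma CB0:
  fixes A B :: "real mat"
  assumes A: "A \<in> carrier_mat j d" and B: "B \<in> carrier_mat d j"
  shows "det (A * B) = (\<Sum>f\<in>Fs d j. (\<Prod>i\<in>{0..<j}. A $$ (i, f i)) * det (mat\<^sub>r j j (\<lambda>i. row B (f i))))"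
proof -
  have "det (A * B) = (\<Sum>f\<in>Fs d j. det (mat\<^sub>r j j (\<lambda>i. A $$ (i, f i) \<cdot>\<^sub>v row B (f i))))"
    unfolding mat_mul_finsum_alt[OF A B] Fs_def
    by (rule det_linear_rows_sum[of "{0..<d}"], use A B in auto)
  also have "\<dots> = (\<Sum>f\<in>Fs d j. (\<Prod>i\<in>{0..<j}. A $$ (i, f i)) * det (mat\<^sub>r j j (\<lambda>i. row B (f i))))"
    by (rule sum.cong[OF refl], rule det_rows_mul, use B in auto)
  finally show ?thesis .
qed

definition hterm :: "real mat \<Rightarrow> nat \<Rightarrow> (nat \<Rightarrow> nat) \<Rightarrow> real" where
  "hterm C j f = (\<Prod>i\<in>{0..<j}. C $$ (f i, i)) * det (mat\<^sub>r j j (\<lambda>i. row C (f i)))"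

lemma CtD_index:
  assumes C: "C \<in> carrier_mat d j" and i: "i < j" and r: "r < d"
  shows "(transpose_mat C * diagm d \<nu>) $$ (i, r) = \<nu> r * C $$ (r, i)"
proof -
  have "(transpose_mat C * diagm d \<nu>) $$ (i, r) = (\<Sum>k\<in>{0..<d}. C $$ (k, i) * (if k = r then \<nu> k else 0))"
    using C i r by (simp add: scalar_prod_def)
  also have "\<dots> = \<nu> r * C $$ (r, i)" using r by (simp add: if_distrib cong: if_cong)
  finally show ?thesis .
qed

lemma expand1:
  assumes C: "C \<in> carrier_mat d j"
  shows "det (transpose_mat C * diagm d \<nu> * C) = (\<Sum>f\<in>Fs d j. (\<Prod>i\<in>{0..<j}. \<nu> (f i)) * hterm C j f)"
proof -
  have A: "transpose_mat C * diagm d \<nu> \<in> carrier_mat j d" using C by simp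
  show ?thesis unfolding CB0[OF A C] hterm_def
  proof (rule sum.cong[OF refl])
    fix f assume f: "f \<in> Fs d j"
    have "(\<Prod>i\<in>{0..<j}. (transpose_mat C * diagm d \<nu>) $$ (i, f i)) = (\<Prod>i\<in>{0..<j}. \<nu> (f i) * C $$ (f i, i))"
      by (rule prod.cong[OF refl], rule CtD_index[OF C], use f in \<open>auto simp: Fs_def\<close>)
    thus "(\<Prod>i\<in>{0..<j}. (transpose_mat C * diagm d \<nu>) $$ (i, f i)) * det (mat\<^sub>r j j (\<lambda>i. row C (f i))) =
         (\<Prod>i\<in>{0..<j}. \<nu> (f i)) * ((\<Prod>i\<in>{0..<j}. C $$ (f i, i)) * det (mat\<^sub>r j j (\<lambda>i. row C (f i))))"
      by (simp add: prod.distrib)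
  qed
qed

lemma hterm_noninj:
  assumes C: "C \<in> carrier_mat d j" and f: "\<not> inj_on f {0..<j}"
  shows "hterm C j f = 0"
proof -
  from f obtain a b where ab: "a < j" "b < j" "a \<noteq> b" "f a = f b" unfolding inj_on_def by auto
  have R: "mat\<^sub>r j j (\<lambda>i. row C (f i)) \<in> carrier_mat j j" by simp
  have "row (mat\<^sub>r j j (\<lambda>i. row C (f i))) a = row (mat\<^sub>r j j (\<lambda>i. row C (f i))) b"
    using ab C by simp
  hence "det (mat\<^sub>r j j (\<lambda>i. row C (f i))) = 0" by (rule det_identical_rows[OF R ab(3) ab(1,2)])
  thus ?thesis unfolding hterm_def by simp
qed


definition Ts :: "nat \<Rightarrow> nat \<Rightarrow> nat set set" where
  "Ts d j = {T. T \<subseteq> {0..<d} \<and> card T = j}"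

definition HT :: "real mat \<Rightarrow> nat \<Rightarrow> nat \<Rightarrow> nat set \<Rightarrow> real" where
  "HT C d j T = (\<Sum>f\<in>{f\<in>Fs d j. inj_on f {0..<j} \<and> f ` {0..<j} = T}. hterm C j f)"

lemma finite_Ts: "finite (Ts d j)"
  unfolding Ts_def by (rule finite_subset[of _ "Pow {0..<d}"]) auto

lemma expand2:
  assumes C: "C \<in> carrier_mat d j"
  shows "det (transpose_mat C * diagm d \<nu> * C) = (\<Sum>T\<in>Ts d j. (\<Prod>t\<in>T. \<nu> t) * HT C d j T)"
proof -
  let ?Fi = "{f\<in>Fs d j. inj_on f {0..<j}}"
  let ?g = "\<lambda>f. (\<Prod>i\<in>{0..<j}. \<nu> (f i)) * hterm C j f"
  have fFi: "finite ?Fi" using finite_Fs by simp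
  have "det (transpose_mat C * diagm d \<nu> * C) = (\<Sum>f\<in>Fs d j. ?g f)" by (rule expand1[OF C])
  also have "\<dots> = (\<Sum>f\<in>?Fi. ?g f)"
    by (rule sum.mono_neutral_right[OF finite_Fs], auto simp: hterm_noninj[OF C])
  also have "\<dots> = (\<Sum>T\<in>Ts d j. \<Sum>f\<in>{f\<in>?Fi. f ` {0..<j} = T}. ?g f)"
  proof (rule sum.group[symmetric, OF fFi finite_Ts])
    show "(\<lambda>f. f ` {0..<j}) ` ?Fi \<subseteq> Ts d j"
      unfolding Ts_def Fs_def by (auto simp: card_image)
  qed
  also have "\<dots> = (\<Sum>T\<in>Ts d j. (\<Prod>t\<in>T. \<nu> t) * HT C d j T)"
  proof (rule sum.cong[OF refl])
    fix T assume T: "T \<in> Ts d j"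
    have "(\<Sum>f\<in>{f\<in>?Fi. f ` {0..<j} = T}. ?g f) = (\<Sum>f\<in>{f\<in>?Fi. f ` {0..<j} = T}. (\<Prod>t\<in>T. \<nu> t) * hterm C j f)"
    proof (rule sum.cong[OF refl])
      fix f assume f: "f \<in> {f\<in>?Fi. f ` {0..<j} = T}"
      have "(\<Prod>t\<in>T. \<nu> t) = (\<Prod>i\<in>{0..<j}. \<nu> (f i))"
        using f prod.reindex[of f "{0..<j}" \<nu>] by auto
      thus "?g f = (\<Prod>t\<in>T. \<nu> t) * hterm C j f" by simp
    qed
    also have "\<dots> = (\<Prod>t\<in>T. \<nu> t) * HT C d j T" unfolding HT_def sum_distrib_left
      by (rule sum.cong) auto
    finally show "(\<Sum>f\<in>{f\<in>?Fi. f ` {0..<j} = T}. ?g f) = (\<Prod>t\<in>T. \<nu> t) * HT C d j T" .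
  qed
  finally show ?thesis .
qed

lemma quad_form:
  fixes B A :: "real mat"
  assumes B: "B \<in> carrier_mat d j" and A: "A \<in> carrier_mat d d" and x: "x \<in> carrier_vec j"
  shows "x \<bullet> ((transpose_mat B * A * B) *\<^sub>v x) = (B *\<^sub>v x) \<bullet> (A *\<^sub>v (B *\<^sub>v x))"
proof -
  have tB: "transpose_mat B \<in> carrier_mat j d" using B by simp
  have Bx: "B *\<^sub>v x \<in> carrier_vec d" using B x by simp
  have "(transpose_mat B * A * B) *\<^sub>v x = transpose_mat B *\<^sub>v (A *\<^sub>v (B *\<^sub>v x))"
    using assoc_mult_mat_vec[OF mult_carrier_mat[OF tB A] B x] assoc_mult_mat_vec[OF tB A Bx] by simp
  hence "x \<bullet> ((transpose_mat B * A * B) *\<^sub>v x) = (transpose_mat B *\<^sub>v (A *\<^sub>v (B *\<^sub>v x))) \<bullet> x"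
    using A B x by (simp add: comm_scalar_prod[of _ j])
  also have "\<dots> = (A *\<^sub>v (B *\<^sub>v x)) \<bullet> (B *\<^sub>v x)"
    using transpose_vec_mult_scalar[OF B x, of "A *\<^sub>v (B *\<^sub>v x)"] A B x by simp
  also have "\<dots> = (B *\<^sub>v x) \<bullet> (A *\<^sub>v (B *\<^sub>v x))" by (rule comm_scalar_prod[of _ d], use A B x in auto)
  finally show ?thesis .
qed

lemma psd_spectral:
  fixes G :: "real mat"
  assumes G: "G \<in> carrier_mat n n" and sym: "transpose_mat G = G"
    and psd: "\<And>x. x \<in> carrier_vec n \<Longrightarrow> x \<bullet> (G *\<^sub>v x) \<ge> 0"
  shows "\<exists>Q \<mu>. Q \<in> carrier_mat n n \<and> transpose_mat Q * Q = 1\<^sub>m n \<and> Q * transpose_mat Q = 1\<^sub>m n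
     \<and> G = Q * diagm n \<mu> * transpose_mat Q \<and> (\<forall>i<n. \<mu> i \<ge> 0)"
proof -
  obtain Q \<mu> where Q: "Q \<in> carrier_mat n n" and QQ: "transpose_mat Q * Q = 1\<^sub>m n"
    and QQ': "Q * transpose_mat Q = 1\<^sub>m n" and GQ: "G = Q * diagm n \<mu> * transpose_mat Q"
    using spectral[OF G sym] by blast
  have "\<mu> i \<ge> 0" if i: "i < n" for i
    unfolding spec_mu[OF G Q QQ QQ' GQ i] using psd Q i by simp
  thus ?thesis using Q QQ QQ' GQ by blast
qed

lemma psd_det_nonneg:
  fixes G :: "real mat"
  assumes G: "G \<in> carrier_mat n n" and sym: "transpose_mat G = G"
    and psd: "\<And>x. x \<in> carrier_vec n \<Longrightarrow> x \<bullet> (G *\<^sub>v x) \<ge> 0"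
  shows "det G \<ge> 0"
proof -
  obtain Q \<mu> where Q: "Q \<in> carrier_mat n n" and QQ: "transpose_mat Q * Q = 1\<^sub>m n"
    and QQ': "Q * transpose_mat Q = 1\<^sub>m n" and GQ: "G = Q * diagm n \<mu> * transpose_mat Q"
    and nn: "\<forall>i<n. \<mu> i \<ge> 0"
    using psd_spectral[OF G sym psd] by blast
  show ?thesis unfolding spec_det[OF G Q QQ QQ' GQ] using nn by (intro prod_nonneg) auto
qed

lemma CDC_sym:
  assumes C: "C \<in> carrier_mat d j"
  shows "transpose_mat (transpose_mat C * diagm d \<nu> * C) = transpose_mat C * diagm d \<nu> * C"
proof -
  have tD: "transpose_mat (diagm d \<nu>) = diagm d \<nu>" by (rule eq_matI) auto
  have tC: "transpose_mat C \<in> carrier_mat j d" using C by simp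
  have CD: "transpose_mat C * diagm d \<nu> \<in> carrier_mat j d" using C by simp
  have "transpose_mat (transpose_mat C * diagm d \<nu> * C) = transpose_mat C * transpose_mat (transpose_mat C * diagm d \<nu>)"
    by (rule transpose_mult[OF CD C])
  also have "transpose_mat (transpose_mat C * diagm d \<nu>) = transpose_mat (diagm d \<nu>) * transpose_mat (transpose_mat C)"
    by (rule transpose_mult[OF tC diagm_carrier])
  finally show ?thesis unfolding tD using C by (simp add: assoc_dim)
qed

lemma diagm_mult_vec:
  assumes y: "y \<in> carrier_vec d" and r: "r < d"
  shows "(diagm d \<nu> *\<^sub>v y) $ r = \<nu> r * y $ r"
proof -
  have "(diagm d \<nu> *\<^sub>v y) $ r = (\<Sum>k\<in>{0..<d}. diagm d \<nu> $$ (r,k) * y $ k)"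
    using r y by (simp add: scalar_prod_def del: diagm_index)
  also have "\<dots> = (\<Sum>k\<in>{0..<d}. (if k = r then \<nu> r * y $ r else 0))"
    by (rule sum.cong, auto simp: r)
  also have "\<dots> = \<nu> r * y $ r" using r by simp
  finally show ?thesis .
qed

lemma CDC_psd:
  assumes C: "C \<in> carrier_mat d j" and nn: "\<And>i. i < d \<Longrightarrow> \<nu> i \<ge> 0" and x: "x \<in> carrier_vec j"
  shows "x \<bullet> ((transpose_mat C * diagm d \<nu> * C) *\<^sub>v x) \<ge> 0"
proof -
  let ?y = "C *\<^sub>v x"
  have y: "?y \<in> carrier_vec d" using C x by simp
  have "x \<bullet> ((transpose_mat C * diagm d \<nu> * C) *\<^sub>v x) = ?y \<bullet> (diagm d \<nu> *\<^sub>v ?y)"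
    by (rule quad_form[OF C diagm_carrier x])
  also have "\<dots> = (\<Sum>r\<in>{0..<d}. ?y $ r * (\<nu> r * ?y $ r))"
    unfolding scalar_prod_def using y by (intro sum.cong) (auto simp del: index_mult_mat_vec simp: diagm_mult_vec[OF y])
  also have "\<dots> \<ge> 0" using nn by (intro sum_nonneg) (simp add: mult.left_commute[of "?y $ _"])
  finally show ?thesis .
qed


lemma HT_nonneg:
  assumes C: "C \<in> carrier_mat d j" and T: "T \<in> Ts d j"
  shows "HT C d j T \<ge> 0"
proof -
  define \<nu> where "\<nu> = (\<lambda>t. if t \<in> T then 1 else (0::real))"
  have G: "transpose_mat C * diagm d \<nu> * C \<in> carrier_mat j j" using C by (intro carrier_matI) auto
  have "det (transpose_mat C * diagm d \<nu> * C) \<ge> 0"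
    by (rule psd_det_nonneg[OF G CDC_sym[OF C] CDC_psd[OF C]], auto simp: \<nu>_def)
  also have "det (transpose_mat C * diagm d \<nu> * C) = (\<Sum>T'\<in>Ts d j. (\<Prod>t\<in>T'. \<nu> t) * HT C d j T')"
    by (rule expand2[OF C])
  also have "\<dots> = (\<Sum>T'\<in>Ts d j. if T' = T then HT C d j T' else 0)"
  proof (rule sum.cong[OF refl])
    fix T' assume T': "T' \<in> Ts d j"
    have fT: "finite T" using T unfolding Ts_def using finite_subset by blast
    show "(\<Prod>t\<in>T'. \<nu> t) * HT C d j T' = (if T' = T then HT C d j T' else 0)"
    proof (cases "T' = T")
      case True thus ?thesis by (simp add: \<nu>_def)
    next
      case False
      have "\<not> T' \<subseteq> T"
      proof
        assume "T' \<subseteq> T"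
        hence "T' = T" using card_subset_eq[OF fT] T T' unfolding Ts_def by auto
        thus False using False by simp
      qed
      then obtain t where t: "t \<in> T'" "t \<notin> T" by blast
      have fT': "finite T'" using T' unfolding Ts_def using finite_subset by blast
      have "(\<Prod>t\<in>T'. \<nu> t) = 0" by (rule prod_zero[OF fT'], use t in \<open>auto simp: \<nu>_def\<close>)
      thus ?thesis using False by simp
    qed
  qed
  also have "\<dots> = HT C d j T" using T finite_Ts by simp
  finally show ?thesis .
qed

lemma key_ineq:
  assumes C: "C \<in> carrier_mat d j" and pos: "\<And>i. i < d \<Longrightarrow> \<mu> i > 0"
  shows "(\<Prod>k<j. sort (map \<mu> [0..<d]) ! k) * det (transpose_mat C * C) \<le> det (transpose_mat C * diagm d \<mu> * C)"
proof -
  let ?P = "\<Prod>k<j. sort (map \<mu> [0..<d]) ! k"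
  have one: "diagm d (\<lambda>_. 1) = 1\<^sub>m d" by (rule eq_matI) auto
  have "det (transpose_mat C * C) = det (transpose_mat C * diagm d (\<lambda>_. 1) * C)"
    unfolding one using C by simp
  also have "\<dots> = (\<Sum>T\<in>Ts d j. HT C d j T)" unfolding expand2[OF C] by simp
  finally have e1: "det (transpose_mat C * C) = (\<Sum>T\<in>Ts d j. HT C d j T)" .
  have "?P * det (transpose_mat C * C) = (\<Sum>T\<in>Ts d j. ?P * HT C d j T)"
    unfolding e1 sum_distrib_left ..
  also have "\<dots> \<le> (\<Sum>T\<in>Ts d j. (\<Prod>t\<in>T. \<mu> t) * HT C d j T)"
  proof (rule sum_mono)
    fix T assume T: "T \<in> Ts d j"
    show "?P * HT C d j T \<le> (\<Prod>t\<in>T. \<mu> t) * HT C d j T"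
    proof (rule mult_right_mono)
      show "0 \<le> HT C d j T" by (rule HT_nonneg[OF C T])
      show "?P \<le> (\<Prod>t\<in>T. \<mu> t)" using T pos unfolding Ts_def by (intro prod_subset_ge_sorted) auto
    qed
  qed
  also have "\<dots> = det (transpose_mat C * diagm d \<mu> * C)" unfolding expand2[OF C] ..
  finally show ?thesis .
qed


definition mtrace :: "real mat \<Rightarrow> real" where
  "mtrace M = (\<Sum>i<dim_row M. M $$ (i,i))"

lemma mtrace_comm:
  assumes X: "X \<in> carrier_mat m n" and Y: "Y \<in> carrier_mat n m"
  shows "mtrace (X * Y) = mtrace (Y * X)"
proof -
  have "mtrace (X * Y) = (\<Sum>i<m. \<Sum>k<n. X $$ (i,k) * Y $$ (k,i))"
    unfolding mtrace_def using X Y by (auto simp: scalar_prod_def atLeast0LessThan intro!: sum.cong)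
  also have "\<dots> = (\<Sum>k<n. \<Sum>i<m. Y $$ (k,i) * X $$ (i,k))" by (subst sum.swap) (simp add: mult.commute)
  also have "\<dots> = mtrace (Y * X)"
    unfolding mtrace_def using X Y by (auto simp: scalar_prod_def atLeast0LessThan intro!: sum.cong)
  finally show ?thesis .
qed

lemma det_le_one:
  fixes G :: "real mat"
  assumes G: "G \<in> carrier_mat n n" and sym: "transpose_mat G = G"
    and psd: "\<And>x. x \<in> carrier_vec n \<Longrightarrow> x \<bullet> (G *\<^sub>v x) \<ge> 0"
    and dg: "\<And>k. k < n \<Longrightarrow> G $$ (k,k) \<le> 1"
  shows "det G \<le> 1"
proof -
  obtain Q \<mu> where Q: "Q \<in> carrier_mat n n" and QQ: "transpose_mat Q * Q = 1\<^sub>m n"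
    and QQ': "Q * transpose_mat Q = 1\<^sub>m n" and GQ: "G = Q * diagm n \<mu> * transpose_mat Q"
    and nn: "\<forall>i<n. \<mu> i \<ge> 0"
    using psd_spectral[OF G sym psd] by blast
  have tQ: "transpose_mat Q \<in> carrier_mat n n" using Q by simp
  have "(\<Sum>i<n. \<mu> i) = mtrace (transpose_mat Q * G * Q)"
    unfolding spec_conj[OF G Q QQ QQ' GQ] mtrace_def by simp
  also have "\<dots> = mtrace (Q * (transpose_mat Q * G))"
    by (rule mtrace_comm[OF mult_carrier_mat[OF tQ G] Q])
  also have "\<dots> = mtrace G" using Q tQ G by (simp add: assoc_dim[symmetric] QQ')
  also have "\<dots> \<le> (\<Sum>i<n. 1)" unfolding mtrace_def using G dg sum_mono[of "{..<n}" "\<lambda>i. G $$ (i,i)" "\<lambda>_. 1"] by simp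
  finally have tr: "(\<Sum>i<n. \<mu> i) \<le> real n" by simp
  have "det G = (\<Prod>i<n. \<mu> i)" by (rule spec_det[OF G Q QQ QQ' GQ])
  also have "\<dots> \<le> (\<Prod>i<n. exp (\<mu> i - 1))"
    by (rule prod_mono, use nn in auto)
      (metis add.commute diff_add_cancel exp_ge_add_one_self)
  also have "\<dots> = exp (\<Sum>i<n. (\<mu> i - 1))" by (simp add: exp_sum)
  also have "\<dots> \<le> 1" using tr by (simp add: sum_subtractf)
  finally show ?thesis .
qed


lemma BAB_sym:
  fixes A B :: "real mat"
  assumes B: "B \<in> carrier_mat d j" and A: "A \<in> carrier_mat d d" and sym: "transpose_mat A = A"
  shows "transpose_mat (transpose_mat B * A * B) = transpose_mat B * A * B"
proof -
  have tB: "transpose_mat B \<in> carrier_mat j d" using B by simp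
  have BA: "transpose_mat B * A \<in> carrier_mat j d" using B A by simp
  have "transpose_mat (transpose_mat B * A * B) = transpose_mat B * transpose_mat (transpose_mat B * A)"
    by (rule transpose_mult[OF BA B])
  also have "transpose_mat (transpose_mat B * A) = transpose_mat A * transpose_mat (transpose_mat B)"
    by (rule transpose_mult[OF tB A])
  finally show ?thesis unfolding sym using A B by (simp add: assoc_dim)
qed

lemma BAB_diag:
  fixes A B :: "real mat"
  assumes B: "B \<in> carrier_mat d j" and A: "A \<in> carrier_mat d d" and k: "k < j"
  shows "(transpose_mat B * A * B) $$ (k,k) = col B k \<bullet> (A *\<^sub>v col B k)"
  using A B k by (simp add: assoc_dim mult_mat_vec_def)

lemma core:
  fixes V W :: "real mat"
  assumes V: "V \<in> carrier_mat d n" and W: "pos_def d W"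
    and feas: "\<forall>i<n. col V i \<bullet> (W *\<^sub>v col V i) \<le> 1"
    and S: "S \<subseteq> {..<n}" "card S = j" and jd: "j \<le> d"
    and dpos: "det (submatrix (transpose_mat V * V) S S) > 0"
  shows "det (submatrix (transpose_mat V * V) S S) \<le> exp (Delta j W)"
proof -
  have Wc: "W \<in> carrier_mat d d" and symW: "transpose_mat W = W"
    and pd: "\<And>x. x \<in> carrier_vec d \<Longrightarrow> x \<noteq> 0\<^sub>v d \<Longrightarrow> x \<bullet> (W *\<^sub>v x) > 0"
    using W unfolding pos_def_def by auto
  obtain Q \<mu> where Q: "Q \<in> carrier_mat d d" and QQ: "transpose_mat Q * Q = 1\<^sub>m d"
    and QQ': "Q * transpose_mat Q = 1\<^sub>m d" and WQ: "W = Q * diagm d \<mu> * transpose_mat Q"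
    using spectral[OF Wc symW] by blast
  have mupos: "\<mu> i > 0" if i: "i < d" for i
  proof -
    have cQ: "col Q i \<in> carrier_vec d" using Q by (simp add: carrier_vecI)
    have "col Q i \<noteq> 0\<^sub>v d" using spec_col_norm[OF Wc Q QQ QQ' WQ i] by auto
    thus ?thesis unfolding spec_mu[OF Wc Q QQ QQ' WQ i] using pd cQ by simp
  qed
  let ?ys = "sort (map \<mu> [0..<d])"
  define P where "P = (\<Prod>k<j. ?ys ! k)"
  have yspos: "?ys ! k > 0" if k: "k < j" for k
  proof -
    have "k < length ?ys" using k jd by simp
    hence "?ys ! k \<in> set ?ys" by (rule nth_mem)
    thus ?thesis using mupos by auto
  qed
  have Ppos: "P > 0" unfolding P_def using yspos by (intro prod_pos) auto
  have expD: "exp (Delta j W) = 1 / P"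
  proof -
    have "Delta j W = - (\<Sum>i<j. ln (?ys ! i))"
      unfolding Delta_def spec_eigvals[OF Wc Q QQ QQ' WQ] ..
    hence "exp (Delta j W) = inverse (\<Prod>i<j. exp (ln (?ys ! i)))"
      by (simp add: exp_minus exp_sum)
    also have "(\<Prod>i<j. exp (ln (?ys ! i))) = P" unfolding P_def using yspos by (intro prod.cong) auto
    finally show ?thesis by (simp add: field_simps)
  qed
  define VS where "VS = mat d j (\<lambda>(r,k). V $$ (r, pick S k))"
  have VS: "VS \<in> carrier_mat d j" unfolding VS_def by simp
  have pickS: "pick S k \<in> S" if "k < j" for k using pick_in_set_le[of k S] S that by simp
  have colVS: "col VS k = col V (pick S k)" if k: "k < j" for k
    unfolding VS_def using k V pickS[OF k] S by (intro eq_vecI) auto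
  have cardS: "card {i. i < n \<and> i \<in> S} = j"
  proof -
    have "{i. i < n \<and> i \<in> S} = S" using S by auto
    thus ?thesis using S by simp
  qed
  have sub: "submatrix (transpose_mat V * V) S S = transpose_mat VS * VS"
  proof (rule eq_matI)
    fix a b assume ab: "a < dim_row (transpose_mat VS * VS)" "b < dim_col (transpose_mat VS * VS)"
    hence a: "a < j" and b: "b < j" using VS by auto
    have pa: "pick S a < n" and pb: "pick S b < n" using pickS[OF a] pickS[OF b] S by auto
    have "submatrix (transpose_mat V * V) S S $$ (a,b) = (transpose_mat V * V) $$ (pick S a, pick S b)"
      by (rule submatrix_index, use V a b cardS in auto)
    also have "\<dots> = col V (pick S a) \<bullet> col V (pick S b)" using V pa pb by simp
    also have "\<dots> = (transpose_mat VS * VS) $$ (a,b)" using VS a b colVS by simp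
    finally show "submatrix (transpose_mat V * V) S S $$ (a,b) = (transpose_mat VS * VS) $$ (a,b)" .
  qed (use VS V cardS in \<open>auto simp: dim_submatrix\<close>)
  define C where "C = transpose_mat Q * VS"
  have tQ: "transpose_mat Q \<in> carrier_mat d d" using Q by simp
  have C: "C \<in> carrier_mat d j" unfolding C_def using Q VS by simp
  have tVS: "transpose_mat VS \<in> carrier_mat j d" using VS by simp
  have tC: "transpose_mat C = transpose_mat VS * Q"
    unfolding C_def using transpose_mult[OF tQ VS] by simp
  have CC: "transpose_mat C * C = transpose_mat VS * VS"
  proof -
    have "transpose_mat C * C = transpose_mat VS * (Q * transpose_mat Q) * VS"
      unfolding tC unfolding C_def using tVS Q tQ VS by (simp add: assoc_dim)
    thus ?thesis unfolding QQ' using VS by simp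
  qed
  have CDC: "transpose_mat C * diagm d \<mu> * C = transpose_mat VS * W * VS"
    unfolding tC WQ unfolding C_def using tVS Q tQ VS by (simp add: assoc_dim)
  have k1: "P * det (transpose_mat VS * VS) \<le> det (transpose_mat VS * W * VS)"
    using key_ineq[OF C, of \<mu>, OF mupos] unfolding CC CDC P_def by simp
  have G: "transpose_mat VS * W * VS \<in> carrier_mat j j" using VS Wc by (intro carrier_matI) auto
  have k2: "det (transpose_mat VS * W * VS) \<le> 1"
  proof (rule det_le_one[OF G BAB_sym[OF VS Wc symW]])
    fix x :: "real vec" assume x: "x \<in> carrier_vec j"
    show "x \<bullet> ((transpose_mat VS * W * VS) *\<^sub>v x) \<ge> 0"
    proof (cases "VS *\<^sub>v x = 0\<^sub>v d")
      case True thus ?thesis unfolding quad_form[OF VS Wc x] using Wc by simp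
    next
      case False thus ?thesis unfolding quad_form[OF VS Wc x] using pd[OF _ False] VS x
        by (simp add: less_imp_le)
    qed
  next
    fix k assume k: "k < j"
    show "(transpose_mat VS * W * VS) $$ (k,k) \<le> 1"
      unfolding BAB_diag[OF VS Wc k] colVS[OF k] using feas pickS[OF k] S by auto
  qed
  have "P * det (submatrix (transpose_mat V * V) S S) \<le> 1" unfolding sub using k1 k2 by simp
  thus ?thesis unfolding expD using Ppos by (simp add: field_simps)
qed


theorem lemma4p2:
  fixes V :: "real mat" and d n j :: nat
  assumes "V \<in> carrier_mat d n"
    and "vec_space.rank n (transpose_mat V * V) = d"
    and "1 \<le> j" and "j \<le> d"
  shows "msd j (transpose_mat V * V) \<le>
           exp (Inf {Delta j W | W. pos_def d W \<and>
                       (\<forall>i<n. col V i \<bullet> (W *\<^sub>v col V i) \<le> 1)})"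
proof -
  have V: "V \<in> carrier_mat d n" using assms(1) .
  let ?M = "transpose_mat V * V"
  have M: "?M \<in> carrier_mat n n" using V by simp
  have dn: "d \<le> n" using vec_space.rank_le_nc[OF M] assms(2) by simp
  have jd: "j \<le> d" using assms(4) .
  let ?Wset = "{Delta j W | W. pos_def d W \<and> (\<forall>i<n. col V i \<bullet> (W *\<^sub>v col V i) \<le> 1)}"
  define \<epsilon> where "\<epsilon> = 1 / (1 + (\<Sum>i<n. col V i \<bullet> col V i))"
  have sq_nn: "col V i \<bullet> col V i \<ge> 0" for i
    by (simp add: scalar_prod_def sum_nonneg)
  have sum_nn: "(\<Sum>i<n. col V i \<bullet> col V i) \<ge> 0" using sq_nn by (simp add: sum_nonneg)
  have eps: "\<epsilon> > 0" unfolding \<epsilon>_def using sum_nn by simp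
  define W0 where "W0 = diagm d (\<lambda>_. \<epsilon>)"
  have W0x: "x \<bullet> (W0 *\<^sub>v x) = \<epsilon> * (x \<bullet> x)" if x: "x \<in> carrier_vec d" for x
  proof -
    have "x \<bullet> (W0 *\<^sub>v x) = (\<Sum>r\<in>{0..<d}. x $ r * (\<epsilon> * x $ r))"
      unfolding scalar_prod_def W0_def using x
      by (intro sum.cong) (auto simp del: index_mult_mat_vec simp: diagm_mult_vec[OF x])
    also have "\<dots> = \<epsilon> * (x \<bullet> x)" using x by (simp add: scalar_prod_def sum_distrib_left mult_ac)
    finally show ?thesis .
  qed
  have W0pd: "pos_def d W0" unfolding pos_def_def
  proof (intro conjI ballI impI)
    show "W0 \<in> carrier_mat d d" unfolding W0_def by simp
    show "transpose_mat W0 = W0" unfolding W0_def by (rule eq_matI) auto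
    fix x :: "real vec" assume "x \<in> carrier_vec d" "x \<noteq> 0\<^sub>v d"
    thus "x \<bullet> (W0 *\<^sub>v x) > 0" using W0x sprod_self_pos eps by simp
  qed
  have W0f: "\<forall>i<n. col V i \<bullet> (W0 *\<^sub>v col V i) \<le> 1"
  proof (intro allI impI)
    fix i assume i: "i < n"
    have c: "col V i \<in> carrier_vec d" using V i by (simp add: carrier_vecI)
    have le: "col V i \<bullet> col V i \<le> (\<Sum>i<n. col V i \<bullet> col V i)"
      using i sq_nn by (intro member_le_sum) auto
    have "col V i \<bullet> (W0 *\<^sub>v col V i) = \<epsilon> * (col V i \<bullet> col V i)" by (rule W0x[OF c])
    also have "\<dots> \<le> 1" unfolding \<epsilon>_def using le sum_nn by (simp add: field_simps)
    finally show "col V i \<bullet> (W0 *\<^sub>v col V i) \<le> 1" .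
  qed
  have Wne: "?Wset \<noteq> {}" using W0pd W0f by blast
  let ?Sset = "{S. S \<subseteq> {..<n} \<and> card S = j}"
  have dimM: "dim_row ?M = n" using V by simp
  have eqset: "{det (submatrix ?M S S) | S. S \<subseteq> {..<dim_row ?M} \<and> card S = j}
     = (\<lambda>S. det (submatrix ?M S S)) ` ?Sset" unfolding dimM by blast
  have fin: "finite ?Sset" by (rule finite_subset[of _ "Pow {..<n}"]) auto
  have ne: "?Sset \<noteq> {}"
  proof -
    have "{..<j} \<in> ?Sset" using jd dn by auto
    thus ?thesis by blast
  qed
  show ?thesis unfolding msd_def eqset
  proof (rule Max.boundedI)
    show "finite ((\<lambda>S. det (submatrix ?M S S)) ` ?Sset)" using fin by simp
    show "(\<lambda>S. det (submatrix ?M S S)) ` ?Sset \<noteq> {}" using ne by simp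
    fix a assume "a \<in> (\<lambda>S. det (submatrix ?M S S)) ` ?Sset"
    then obtain S where S: "S \<subseteq> {..<n}" "card S = j" and a: "a = det (submatrix ?M S S)" by blast
    show "a \<le> exp (Inf ?Wset)"
    proof (cases "a > 0")
      case False
      thus ?thesis by (meson exp_gt_zero le_less_trans not_le less_imp_le)
    next
      case True
      have "ln a \<le> Inf ?Wset"
      proof (rule cInf_greatest[OF Wne])
        fix x assume "x \<in> ?Wset"
        then obtain W where W: "pos_def d W" and f: "\<forall>i<n. col V i \<bullet> (W *\<^sub>v col V i) \<le> 1"
          and x: "x = Delta j W" by blast
        have "a \<le> exp (Delta j W)" unfolding a by (rule core[OF V W f S jd], use True a in simp)
        thus "ln a \<le> x" unfolding x using True by (metis ln_exp ln_le_cancel_iff exp_gt_zero)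
      qed
      hence "exp (ln a) \<le> exp (Inf ?Wset)" by simp
      thus ?thesis using True by simp
    qed
  qed
qed

end
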